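(* Let designer $j$ have a participation objective with threshold $\theta_j\in[0,1]$ and budget $T_j>0$, and fix arbitrary prize structures for the other designers. Then the maximum of $\hat R_j(x_{\vec w_j},x_{-j}^{-1},\theta_j)$ over feasible prize structures $\vec w_j$ is attained by a simple contest $\vec w_j^{(k^*,T_j)}$ for some $k^*\in[n]$. Moreover, letting $\phi^*:=\Phi_j^*(\theta_j;x_{\vec w_j^{(k^*,T_j)}},x_{-j}^{-1})$, this $k^*$ satisfies $k^*\in\arg\max_{k\in[n]}\xi_k(\phi^* )$.
   Context: Model. There are $m\ge1$ contests/designers with budgets $T_j$, and $n\ge2$ contestants. Prize structures. A feasible prize structure is $\vec w_j$ with $w_{j,1}\ge\dots\ge w_{j,n}\ge0$ and $\sum_kw_{j,k}\le T_j$. Contestants. Contestant quantiles $q_i$ are i.i.d. $U[0,1]$ with skill $v(q_i)$, where $v$ is strictly decreasing. Contestants choose a contest and an effort; they are ranked by effort within the contest, the rank-$k$ participant gets $w_{j,k}$, and utility is skill times prize minus effort. Interim allocation function. $x_{\vec w_j}(\phi)=x_j(\phi)=\sum_kw_{j,k}\binom{n-1}{k-1}\phi^{k-1}(1-\phi)^{n-k}$. Inverse notation. $x_j^{-1}(y):=\max\{\phi\in[0,1]:x_j(\phi)\ge y\}$ (and $0$ if $x_j(0)<y$); $x_{-j}^{-1}:=\sum_{j'\ne j}x_{j'}^{-1}$; $Q:=x_j^{-1}+x_{-j}^{-1}$; $Q^{-1}(q):=\sup\{y:Q(y)\ge q\}$. Selected equilibrium participation. $\Phi_j^*(q;x_j,x_{-j}^{-1})$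 is the probability that a contestant has quantile $\le q$ and enters contest $j$. - It equals $x_j^{-1}(Q^{-1}(q))$ when $x_j$ is strictly decreasing. - When several contests have identical constant interim allocation functions with the maximal constant value, participants are divided equally among them. Precisely: if $M_1^*$ is that set, $x^*$ the common value, and $q^*=\min\{1,\sum_{j'\text{ strictly decreasing}}x_{j'}^{-1}(x^* )\}$, then each $j\in M_1^*$ has $\Phi_j^*(q)=\max\{0,q-q^*\}/|M_1^*|$. - Constant contests with smaller value get $\Phi_j^*\equiv0$. Participation objective. $\hat R_j(x_j,x_{-j}^{-1},\theta_j)=n\,\Phi_j^*(\theta_j;x_j,x_{-j}^{-1})$, the expected number of participants in contest $j$ with quantile $\le\theta_j$. Simple contests. $\vec w_j^{(k,T)}$ gives $T/k$ to each of ranks $1,\dots,k$ and $0$ to the rest. $\xi_k(\phi):=x_{\vec w^{(k,1)}}(\phi)=\frac1k\sum_{l=1}^k\binom{n-1}{l-1}\phi^{l-1}(1-\phi)^{n-l}$. *)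

theory Defs
  imports "HOL-Analysis.Analysis" "HOL-Library.Extended_Real"
begin

text \<open>Prize structures are functions w :: nat => real; only ranks 1..n matter.\<close>

definition feasible :: "nat \<Rightarrow> real \<Rightarrow> (nat \<Rightarrow> real) \<Rightarrow> bool" where
  "feasible n T w \<longleftrightarrow> (\<forall>k\<in>{1..<n}. w (Suc k) \<le> w k) \<and> w n \<ge> 0 \<and> (\<Sum>k=1..n. w k) \<le> T"

definition interim :: "nat \<Rightarrow> (nat \<Rightarrow> real) \<Rightarrow> real \<Rightarrow> real" where
  "interim n w \<phi> = (\<Sum>k=1..n. w k * real ((n - 1) choose (k - 1)) * \<phi> ^ (k - 1) * (1 - \<phi>) ^ (n - k))"

text \<open>The argument is taken in the extended reals so that Q^{-1}(q) = +infinity/-infinity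
  (unbounded / empty sup) is handled by the same formula.\<close>
definition xinv :: "(real \<Rightarrow> real) \<Rightarrow> ereal \<Rightarrow> real" where
  "xinv x y = (if ereal (x 0) < y then 0
               else (GREATEST \<phi>. \<phi> \<in> {0..1} \<and> y \<le> ereal (x \<phi>)))"

definition Qfun :: "nat \<Rightarrow> (nat \<Rightarrow> real \<Rightarrow> real) \<Rightarrow> real \<Rightarrow> real" where
  "Qfun m xs y = (\<Sum>j'<m. xinv (xs j') (ereal y))"

definition Qinv :: "nat \<Rightarrow> (nat \<Rightarrow> real \<Rightarrow> real) \<Rightarrow> real \<Rightarrow> ereal" where
  "Qinv m xs q = Sup {ereal y | y. q \<le> Qfun m xs y}"

definition strictly_decr :: "(real \<Rightarrow> real) \<Rightarrow> bool" where
  "strictly_decr x \<longleftrightarrow> (\<forall>a b. 0 \<le> a \<and> a < b \<and> b \<le> 1 \<longrightarrow> x b < x a)"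

definition const_on01 :: "(real \<Rightarrow> real) \<Rightarrow> bool" where
  "const_on01 x \<longleftrightarrow> (\<forall>\<phi>\<in>{0..1}. x \<phi> = x 0)"

text \<open>Contests are indexed by 0..<m,
  ws j' is the prize structure of contest j'.  (For feasible prize structures the
  interim allocation is either strictly decreasing or constant on [0,1], so the final
  else-branch is never used.)\<close>
definition Phi_star :: "nat \<Rightarrow> nat \<Rightarrow> (nat \<Rightarrow> nat \<Rightarrow> real) \<Rightarrow> nat \<Rightarrow> real \<Rightarrow> real" where
  "Phi_star n m ws j q =
    (let xs = (\<lambda>j'. interim n (ws j'));
         C = {j'. j' < m \<and> const_on01 (xs j')};
         xstar = Max ((\<lambda>j'. xs j' 0) ` C);
         M1 = {j'\<in>C. xs j' 0 = xstar};
         qstar = min 1 (\<Sum>j'\<in>{j'. j' < m \<and> strictly_decr (xs j')}. xinv (xs j') (ereal xstar))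
     in if strictly_decr (xs j) then xinv (xs j) (Qinv m xs q)
        else if const_on01 (xs j) then
          (if j \<in> M1 then max 0 (q - qstar) / real (card M1) else 0)
        else 0)"

definition R_hat :: "nat \<Rightarrow> nat \<Rightarrow> (nat \<Rightarrow> nat \<Rightarrow> real) \<Rightarrow> nat \<Rightarrow> real \<Rightarrow> real" where
  "R_hat n m ws j \<theta> = real n * Phi_star n m ws j \<theta>"

definition simple :: "nat \<Rightarrow> real \<Rightarrow> nat \<Rightarrow> real" where
  "simple k T = (\<lambda>l. if 1 \<le> l \<and> l \<le> k then T / real k else 0)"

definition xi :: "nat \<Rightarrow> nat \<Rightarrow> real \<Rightarrow> real" where
  "xi n k \<phi> = (1 / real k) * (\<Sum>l=1..k. real ((n - 1) choose (l - 1)) * \<phi> ^ (l - 1) * (1 - \<phi>) ^ (n - l))"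

end

theory Submission
  imports Defs
begin
definition Sk :: "nat \<Rightarrow> nat \<Rightarrow> real \<Rightarrow> real" where
  "Sk n k \<psi> = (\<Sum>l=1..k. real ((n-1) choose (l-1)) * \<psi>^(l-1) * (1-\<psi>)^(n-l))"

lemma xi_Sk: "xi n k \<psi> = Sk n k \<psi> / real k"
  by (simp add: xi_def Sk_def)

lemma Sk_n: assumes "n \<ge> 1" shows "Sk n n \<psi> = 1"
proof -
  obtain N where n: "n = Suc N" using assms by (cases n) auto
  have "Sk n n \<psi> = (\<Sum>i=0..N. real (N choose i) * \<psi>^i * (1-\<psi>)^(N-i))"
    unfolding Sk_def n using sum.shift_bounds_cl_Suc_ivl[of "\<lambda>l. real (N choose (l-1)) * \<psi>^(l-1) * (1-\<psi>)^(Suc N-l)" 0 N] by simp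
  also have "\<dots> = (\<psi> + (1-\<psi>))^N"
    by (subst binomial_ring) (simp add: atLeast0AtMost)
  finally show ?thesis by simp
qed

lemma Sk_Suc: "Sk n (Suc k) \<psi> = Sk n k \<psi> + real ((n-1) choose k) * \<psi>^k * (1-\<psi>)^(n - Suc k)"
  by (simp add: Sk_def)

lemma Sk_nonneg: assumes "0 \<le> \<psi>" "\<psi> \<le> 1" shows "0 \<le> Sk n k \<psi>"
  unfolding Sk_def using assms by (intro sum_nonneg) auto

lemma Sk_pred: assumes "N \<ge> 1" shows "Sk (Suc N) N \<psi> = 1 - \<psi>^N"
proof -
  have "Sk (Suc N) (Suc N) \<psi> = 1" by (rule Sk_n) simp
  then show ?thesis by (simp add: Sk_Suc)
qed

lemma Sk_cont: "continuous_on A (Sk n k)"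
  unfolding Sk_def by (intro continuous_intros)

lemma term_deriv: "((\<lambda>\<psi>::real. real (N choose k) * \<psi>^k * (1-\<psi>)^(N-k)) has_real_derivative real (N choose k) * (real k * \<psi>^(k-1) * (1-\<psi>)^(N-k) - \<psi>^k * (real (N-k) * (1-\<psi>)^(N-k-1)))) (at \<psi>)"
  apply (rule derivative_eq_intros refl)+
  apply (simp add: algebra_simps)
  done

lemma Sk_deriv:
  assumes "1 \<le> k" "k \<le> N"
  shows "((Sk (Suc N) k) has_real_derivative
           (- (real N * real ((N-1) choose (k-1)) * \<psi>^(k-1) * (1-\<psi>)^(N-k)))) (at \<psi>)"
  using assms
proof (induction k rule: nat_induct_at_least)
  case base
  have e: "Sk (Suc N) 1 = (\<lambda>\<psi>. (1-\<psi>)^N)" by (auto simp: Sk_def)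
  show ?case unfolding e
    by (rule derivative_eq_intros refl)+ simp
next
  case (Suc k)
  have IH: "((Sk (Suc N) k) has_real_derivative
           (- (real N * real ((N-1) choose (k-1)) * \<psi>^(k-1) * (1-\<psi>)^(N-k)))) (at \<psi>)"
    using Suc by simp
  have e: "Sk (Suc N) (Suc k) = (\<lambda>\<psi>. Sk (Suc N) k \<psi> + real (N choose k) * \<psi>^k * (1-\<psi>)^(N-k))"
    by (auto simp: Sk_Suc)
  obtain k' where k': "k = Suc k'" using Suc by (cases k) auto
  have "\<exists>r. N = Suc k' + Suc r" using \<open>Suc k \<le> N\<close> k' by presburger
  then obtain r where r: "N = Suc k' + Suc r" by blast
  have b1: "real k * real (N choose k) = real N * real ((N-1) choose (k-1))"
  proof -
    have "Suc (k' + Suc r) * ((k' + Suc r) choose k') = (Suc (k' + Suc r) choose Suc k') * Suc k'" by (rule Suc_times_binomial_eq)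
    then have "real (Suc (k' + Suc r)) * real ((k' + Suc r) choose k') = real (Suc (k' + Suc r) choose Suc k') * real (Suc k')"
      by (metis of_nat_mult)
    then show ?thesis using r k' by simp
  qed
  have b2: "real (N-k) * real (N choose k) = real N * real ((N-1) choose k)"
    using binomial_absorb_comp[of N k] by (metis of_nat_mult)
  have D: "((\<lambda>\<psi>. Sk (Suc N) k \<psi> + real (N choose k) * \<psi>^k * (1-\<psi>)^(N-k)) has_real_derivative
    (- (real N * real ((N-1) choose (k-1)) * \<psi>^(k-1) * (1-\<psi>)^(N-k))) +
      real (N choose k) * (real k * \<psi>^(k-1) * (1-\<psi>)^(N-k) - \<psi>^k * (real (N-k) * (1-\<psi>)^(N-k-1)))) (at \<psi>)"
    by (rule DERIV_add[OF IH term_deriv])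
  have "(- (real N * real ((N-1) choose (k-1)) * \<psi>^(k-1) * (1-\<psi>)^(N-k))) +
      real (N choose k) * (real k * \<psi>^(k-1) * (1-\<psi>)^(N-k) - \<psi>^k * (real (N-k) * (1-\<psi>)^(N-k-1)))
     = - (real N * real ((N-1) choose (Suc k - 1)) * \<psi>^(Suc k - 1) * (1-\<psi>)^(N - Suc k))"
  proof -
    have "real (N choose k) * (real k * \<psi>^(k-1) * (1-\<psi>)^(N-k)) = (real k * real (N choose k)) * \<psi>^(k-1) * (1-\<psi>)^(N-k)" by (simp only: mult_ac)
    also have "\<dots> = real N * real ((N-1) choose (k-1)) * \<psi>^(k-1) * (1-\<psi>)^(N-k)" by (simp only: b1)
    finally have 1: "real (N choose k) * (real k * \<psi>^(k-1) * (1-\<psi>)^(N-k)) = real N * real ((N-1) choose (k-1)) * \<psi>^(k-1) * (1-\<psi>)^(N-k)" .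
    have "real (N choose k) * (\<psi>^k * (real (N-k) * (1-\<psi>)^(N-k-1))) = (real (N-k) * real (N choose k)) * \<psi>^k * (1-\<psi>)^(N-k-1)" by (simp only: mult_ac)
    also have "\<dots> = real N * real ((N-1) choose k) * \<psi>^k * (1-\<psi>)^(N-k-1)" by (simp only: b2)
    finally have 2: "real (N choose k) * (\<psi>^k * (real (N-k) * (1-\<psi>)^(N-k-1))) = real N * real ((N-1) choose k) * \<psi>^k * (1-\<psi>)^(N-k-1)" .
    have 3: "N - k - 1 = N - Suc k" by simp
    have b2': "real (N choose k) * real (N - k) = real N * real (N - Suc 0 choose k)" using b2 by (simp add: mult.commute)
    show ?thesis by (simp only: right_diff_distrib 1 2 3) (simp add: b2')
  qed
  then show ?case using D unfolding e by simp
qed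

lemma Sk_strict:
  assumes "1 \<le> k" "k < n" "0 \<le> a" "a < b" "b \<le> 1"
  shows "Sk n k b < Sk n k a"
proof -
  obtain N where n: "n = Suc N" using assms by (cases n) auto
  have kN: "k \<le> N" using assms n by simp
  show ?thesis unfolding n
  proof (rule DERIV_neg_imp_decreasing_open[OF \<open>a < b\<close>])
    fix x assume x: "a < x" "x < b"
    have pos: "0 < real N * real ((N-1) choose (k-1)) * x^(k-1) * (1-x)^(N-k)"
      using x assms kN by (intro mult_pos_pos) auto
    show "\<exists>y. DERIV (Sk (Suc N) k) x :> y \<and> y < 0"
      using Sk_deriv[OF \<open>1 \<le> k\<close> kN, of x] pos by (intro exI[of _ "- (real N * real ((N-1) choose (k-1)) * x^(k-1) * (1-x)^(N-k))"]) auto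
  qed (rule Sk_cont)
qed


lemma abel:
  fixes a b :: "nat \<Rightarrow> real"
  shows "(\<Sum>l=1..N. a l * b l) = (\<Sum>k=1..<N. (a k - a (Suc k)) * (\<Sum>l=1..k. b l)) + a N * (\<Sum>l=1..N. b l)"
proof (induction N)
  case 0
  then show ?case by simp
next
  case (Suc N)
  show ?case
  proof (cases "N = 0")
    case True
    then show ?thesis by simp
  next
    case False
    then have "(\<Sum>k=1..<Suc N. (a k - a (Suc k)) * (\<Sum>l=1..k. b l)) = (\<Sum>k=1..<N. (a k - a (Suc k)) * (\<Sum>l=1..k. b l)) + (a N - a (Suc N)) * (\<Sum>l=1..N. b l)"
      by (subst sum.atLeastLessThan_Suc) auto
    then show ?thesis using Suc by (simp add: algebra_simps)
  qed
qed

definition bern :: "nat \<Rightarrow> nat \<Rightarrow> real \<Rightarrow> real" where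
  "bern n l \<psi> = real ((n-1) choose (l-1)) * \<psi>^(l-1) * (1-\<psi>)^(n-l)"

lemma interim_bern: "interim n w \<psi> = (\<Sum>l=1..n. w l * bern n l \<psi>)"
  by (simp add: interim_def bern_def mult.assoc)

lemma Sk_bern: "Sk n k \<psi> = (\<Sum>l=1..k. bern n l \<psi>)"
  by (simp add: Sk_def bern_def)

lemma interim_abel: assumes "n \<ge> 1"
  shows "interim n w \<psi> = (\<Sum>k=1..<n. (w k - w (Suc k)) * Sk n k \<psi>) + w n"
  using abel[of w "\<lambda>l. bern n l \<psi>" n] Sk_n[OF assms, of \<psi>]
  by (simp add: interim_bern Sk_bern)

lemma sum_w: "(\<Sum>l=1..n. w l) = (\<Sum>k=1..<n. (w k - w (Suc k)) * real k) + w n * real n"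
  using abel[of w "\<lambda>l. 1" n] by simp

lemma feas_diff: "feasible n T w \<Longrightarrow> k \<in> {1..<n} \<Longrightarrow> 0 \<le> w k - w (Suc k)"
  by (auto simp: feasible_def)

lemma wn_le: assumes "feasible n T w" shows "real n * w n \<le> T"
proof -
  have "0 \<le> (\<Sum>k=1..<n. (w k - w (Suc k)) * real k)"
    using feas_diff[OF assms] by (intro sum_nonneg) auto
  then show ?thesis using sum_w[of w n] assms by (auto simp: feasible_def mult.commute)
qed

lemma Sk_at1: assumes "k < n" shows "Sk n k 1 = 0"
  unfolding Sk_def using assms by (intro sum.neutral) auto

lemma interim_at1: assumes "n \<ge> 1" shows "interim n w 1 = w n"
  using interim_abel[OF assms, of w 1] by (simp add: Sk_at1)

lemma interim_cont: "continuous_on A (interim n w)"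
  unfolding interim_def by (intro continuous_intros)

lemma feas_class: assumes "feasible n T w" "n \<ge> 1"
  shows "strictly_decr (interim n w) \<or> const_on01 (interim n w)"
proof (cases "\<forall>k\<in>{1..<n}. w k - w (Suc k) = 0")
  case True
  then have "\<And>\<psi>. interim n w \<psi> = w n" using interim_abel[OF assms(2)] by simp
  then show ?thesis by (simp add: const_on01_def)
next
  case False
  then obtain k0 where k0: "k0 \<in> {1..<n}" "w k0 - w (Suc k0) \<noteq> 0" by blast
  then have k0p: "0 < w k0 - w (Suc k0)" using feas_diff[OF assms(1) k0(1)] by linarith
  have "strictly_decr (interim n w)"
    unfolding strictly_decr_def
  proof (intro allI impI)
    fix a b :: real assume ab: "0 \<le> a \<and> a < b \<and> b \<le> 1"
    have "(\<Sum>k=1..<n. (w k - w (Suc k)) * Sk n k b) < (\<Sum>k=1..<n. (w k - w (Suc k)) * Sk n k a)"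
    proof (rule sum_strict_mono_ex1)
      show "\<forall>k\<in>{1..<n}. (w k - w (Suc k)) * Sk n k b \<le> (w k - w (Suc k)) * Sk n k a"
      proof
        fix k assume k: "k \<in> {1..<n}"
        have "Sk n k b \<le> Sk n k a" using Sk_strict[of k n a b] ab k by auto
        then show "(w k - w (Suc k)) * Sk n k b \<le> (w k - w (Suc k)) * Sk n k a"
          using feas_diff[OF assms(1) k] by (intro mult_left_mono) auto
      qed
      have "(w k0 - w (Suc k0)) * Sk n k0 b < (w k0 - w (Suc k0)) * Sk n k0 a"
        using k0p Sk_strict[of k0 n a b] k0(1) ab by (intro mult_strict_left_mono) auto
      then show "\<exists>k\<in>{1..<n}. (w k - w (Suc k)) * Sk n k b < (w k - w (Suc k)) * Sk n k a"
        using k0(1) by blast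
    qed simp
    then show "interim n w b < interim n w a" using interim_abel[OF assms(2)] by simp
  qed
  then show ?thesis by simp
qed

lemma envelope: assumes "feasible n T w" "n \<ge> 1" "0 \<le> \<psi>" "\<psi> \<le> 1"
  shows "\<exists>k\<in>{1..n}. interim n w \<psi> \<le> T * xi n k \<psi>"
proof -
  have "Max ((\<lambda>k. xi n k \<psi>) ` {1..n}) \<in> (\<lambda>k. xi n k \<psi>) ` {1..n}"
    by (rule Max_in) (use assms(2) in auto)
  then obtain k0 where k0: "k0 \<in> {1..n}" "xi n k0 \<psi> = Max ((\<lambda>k. xi n k \<psi>) ` {1..n})"
    by force
  define M where "M = xi n k0 \<psi>"
  have Mge: "\<And>k. k \<in> {1..n} \<Longrightarrow> xi n k \<psi> \<le> M" unfolding M_def k0 by simp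
  have M0: "0 \<le> M" unfolding M_def xi_Sk using Sk_nonneg[OF assms(3,4)] by simp
  have Sk_le: "\<And>k. k \<in> {1..n} \<Longrightarrow> Sk n k \<psi> \<le> real k * M"
  proof -
    fix k assume k: "k \<in> {1..n}"
    have "Sk n k \<psi> = real k * xi n k \<psi>" using k by (simp add: xi_Sk)
    then show "Sk n k \<psi> \<le> real k * M" using Mge[OF k] by (simp add: mult_left_mono)
  qed
  have "interim n w \<psi> = (\<Sum>k=1..<n. (w k - w (Suc k)) * Sk n k \<psi>) + w n * Sk n n \<psi>"
    using interim_abel[OF assms(2)] Sk_n[OF assms(2)] by simp
  also have "\<dots> \<le> (\<Sum>k=1..<n. (w k - w (Suc k)) * (real k * M)) + w n * (real n * M)"
    using feas_diff[OF assms(1)] Sk_le assms(1,2) 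
    by (intro add_mono sum_mono mult_left_mono) (auto simp: feasible_def)
  also have "\<dots> = M * ((\<Sum>k=1..<n. (w k - w (Suc k)) * real k) + w n * real n)"
    by (simp add: sum_distrib_left algebra_simps)
  also have "\<dots> = M * (\<Sum>l=1..n. w l)"
    by (simp only: sum_w)
  also have "\<dots> \<le> M * T" using assms(1) M0 by (intro mult_left_mono) (auto simp: feasible_def)
  finally show ?thesis using k0(1) by (intro bexI[of _ k0]) (auto simp: M_def mult.commute)
qed

lemma sum_simple: assumes "k \<le> n" shows "(\<Sum>l=1..n. simple k T l * f l) = T / real k * (\<Sum>l=1..k. f l)"
proof -
  have "(\<Sum>l=1..n. simple k T l * f l) = (\<Sum>l\<in>{1..n}. if l \<le> k then T / real k * f l else 0)"
    by (intro sum.cong) (auto simp: simple_def)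
  also have "\<dots> = (\<Sum>l\<in>{l\<in>{1..n}. l \<le> k}. T / real k * f l)"
    by (rule sum.inter_filter[symmetric]) simp
  also have "{l\<in>{1..n}. l \<le> k} = {1..k}" using assms by auto
  finally show ?thesis by (simp add: sum_distrib_left)
qed

lemma interim_simple: assumes "1 \<le> k" "k \<le> n" shows "interim n (simple k T) \<psi> = T * xi n k \<psi>"
  using sum_simple[OF assms(2), of T "\<lambda>l. bern n l \<psi>"]
  by (simp add: interim_bern xi_Sk Sk_bern)

lemma simple_feasible: assumes "1 \<le> k" "k \<le> n" "0 \<le> T" shows "feasible n T (simple k T)"
proof -
  have "(\<Sum>l=1..n. simple k T l) = T"
    using sum_simple[OF assms(2), of T "\<lambda>l. 1"] assms by simp
  then show ?thesis using assms unfolding feasible_def by (auto simp: simple_def)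
qed

lemma simple_strict: assumes "1 \<le> k" "k < n" "0 < T" shows "strictly_decr (interim n (simple k T))"
  unfolding strictly_decr_def interim_simple[OF assms(1) less_imp_le[OF assms(2)]] xi_Sk
  using Sk_strict[OF assms(1,2)] assms by (auto simp: divide_strict_right_mono)

lemma simple_n: assumes "1 \<le> n" shows "interim n (simple n T) \<psi> = T / real n"
  using interim_simple[OF assms order_refl] Sk_n[OF assms] by (simp add: xi_Sk)

lemma xinv_greatest:
  assumes "continuous_on {0..1} x" "Y \<le> ereal (x 0)"
  shows "xinv x Y \<in> {0..1} \<and> Y \<le> ereal (x (xinv x Y)) \<and> (\<forall>b\<in>{0..1}. Y \<le> ereal (x b) \<longrightarrow> b \<le> xinv x Y)"
proof -
  define A where "A = {b\<in>{0..1}. Y \<le> ereal (x b)}"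
  have cl: "closed A"
  proof (cases Y)
    case (real y)
    then have "A = {0..1} \<inter> x -` {y..}" by (auto simp: A_def)
    then show ?thesis using continuous_closed_preimage[OF assms(1)] by simp
  next
    case PInf
    then show ?thesis using assms(2) by simp
  next
    case MInf
    then have "A = {0..1}" by (auto simp: A_def)
    then show ?thesis by simp
  qed
  have "bounded A" by (rule bounded_subset[of "{0..1}"]) (auto simp: A_def)
  then have "compact A" using cl by (simp add: compact_eq_bounded_closed)
  moreover have "0 \<in> A" using assms(2) by (simp add: A_def)
  then have "A \<noteq> {}" by blast
  ultimately obtain a where a: "a \<in> A" "\<forall>t\<in>A. t \<le> a" using compact_attains_sup by blast
  have nl: "\<not> (ereal (x 0) < Y)" using assms(2) by (simp add: not_less)
  have "(GREATEST \<phi>. \<phi> \<in> {0..1} \<and> Y \<le> ereal (x \<phi>)) = a"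
  proof (rule Greatest_equality)
    show "a \<in> {0..1} \<and> Y \<le> ereal (x a)" using a(1) by (simp add: A_def)
    fix y assume "y \<in> {0..1} \<and> Y \<le> ereal (x y)"
    then have "y \<in> A" by (simp add: A_def)
    then show "y \<le> a" using a(2) by blast
  qed
  then have "xinv x Y = a" unfolding xinv_def using nl by simp
  then show ?thesis using a unfolding A_def by blast
qed

lemma xinv_big: "ereal (x 0) < Y \<Longrightarrow> xinv x Y = 0"
  by (simp add: xinv_def)

lemma xinv_range: assumes "continuous_on {0..1} x" shows "xinv x Y \<in> {0..1}"
proof (cases "ereal (x 0) < Y")
  case True
  then show ?thesis using xinv_big[of x Y] by simp
next
  case False
  then have "Y \<le> ereal (x 0)" by simp
  then show ?thesis using xinv_greatest[OF assms] by blast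
qed

lemma xinv_anti: assumes "continuous_on {0..1} x" "Y1 \<le> Y2" shows "xinv x Y2 \<le> xinv x Y1"
proof (cases "ereal (x 0) < Y2")
  case True
  then show ?thesis using xinv_big[of x Y2] xinv_range[OF assms(1), of Y1] by simp
next
  case False
  then have Y2: "Y2 \<le> ereal (x 0)" by simp
  then have Y1: "Y1 \<le> ereal (x 0)" using assms(2) by (rule order_trans[rotated])
  have a: "xinv x Y2 \<in> {0..1}" "Y2 \<le> ereal (x (xinv x Y2))" using xinv_greatest[OF assms(1) Y2] by blast+
  have b: "\<forall>b\<in>{0..1}. Y1 \<le> ereal (x b) \<longrightarrow> b \<le> xinv x Y1" using xinv_greatest[OF assms(1) Y1] by blast
  have "Y1 \<le> ereal (x (xinv x Y2))" using assms(2) a(2) by (rule order_trans)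
  then show ?thesis using b a(1) by blast
qed

lemma xinv_const1: assumes "continuous_on {0..1} x" "const_on01 x" "Y \<le> ereal (x 0)" shows "xinv x Y = 1"
proof -
  have "\<forall>\<phi>\<in>{0..1}. x \<phi> = x 0" using assms(2) by (simp only: const_on01_def)
  then have x1: "x 1 = x 0" by (rule bspec) simp
  have r: "xinv x Y \<in> {0..1}" and q: "\<forall>b\<in>{0..1}. Y \<le> ereal (x b) \<longrightarrow> b \<le> xinv x Y"
    using xinv_greatest[OF assms(1,3)] by blast+
  have "Y \<le> ereal (x 1)" using x1 assms(3) by (simp only:)
  moreover have "(1::real) \<in> {0..1}" by simp
  ultimately have "1 \<le> xinv x Y" using q by blast
  then show ?thesis using r by (simp only: atLeastAtMost_iff) linarith
qed

definition Gf :: "nat \<Rightarrow> nat \<Rightarrow> (nat \<Rightarrow> nat \<Rightarrow> real) \<Rightarrow> nat \<Rightarrow> real \<Rightarrow> real" where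
  "Gf n m ws j y = (\<Sum>j'\<in>{j'. j'<m \<and> j'\<noteq>j}. xinv (interim n (ws j')) (ereal y))"

lemma Gf_anti: "y1 \<le> y2 \<Longrightarrow> Gf n m ws j y2 \<le> Gf n m ws j y1"
  unfolding Gf_def by (intro sum_mono xinv_anti interim_cont) simp

lemma Gf_nonneg: "0 \<le> Gf n m ws j y"
  unfolding Gf_def using xinv_range[OF interim_cont] by (intro sum_nonneg) auto

lemma Qfun_split: assumes "j < m"
  shows "Qfun m (\<lambda>j'. interim n ((ws(j:=w)) j')) y = xinv (interim n w) (ereal y) + Gf n m ws j y"
proof -
  define Oth where "Oth = {j'. j'<m \<and> j'\<noteq>j}"
  have e: "{..<m} = insert j Oth" using assms by (auto simp: Oth_def)
  have fin: "finite Oth" by (simp add: Oth_def)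
  have nj: "j \<notin> Oth" by (simp add: Oth_def)
  have "Qfun m (\<lambda>j'. interim n ((ws(j:=w)) j')) y = (\<Sum>j'\<in>insert j Oth. xinv (interim n ((ws(j:=w)) j')) (ereal y))"
    unfolding Qfun_def e ..
  also have "\<dots> = xinv (interim n ((ws(j:=w)) j)) (ereal y) + (\<Sum>j'\<in>Oth. xinv (interim n ((ws(j:=w)) j')) (ereal y))"
    by (rule sum.insert[OF fin nj])
  also have "(\<Sum>j'\<in>Oth. xinv (interim n ((ws(j:=w)) j')) (ereal y)) = Gf n m ws j y"
    unfolding Gf_def Oth_def[symmetric] by (rule sum.cong) (auto simp: Oth_def)
  finally show ?thesis by simp
qed

lemma sd_mono: assumes "strictly_decr x" "0 \<le> a" "a \<le> b" "b \<le> 1" shows "x b \<le> x a"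
proof (cases "a = b")
  case True then show ?thesis by simp
next
  case False
  then have "a < b" using assms(3) by simp
  then have "x b < x a" using assms unfolding strictly_decr_def by blast
  then show ?thesis by simp
qed

lemma Phi_strict_eq: assumes "j < m" "strictly_decr (interim n w)"
  shows "Phi_star n m (ws(j:=w)) j \<theta> =
    xinv (interim n w) (Sup {ereal y |y. \<theta> \<le> xinv (interim n w) (ereal y) + Gf n m ws j y})"
  unfolding Phi_star_def Let_def fun_upd_same
  apply (subst if_P[OF assms(2)])
  unfolding Qinv_def Qfun_split[OF assms(1)] by (rule refl)

lemma Phi_char:
  assumes "j < m" "strictly_decr (interim n w)" "0 < \<phi>" "\<phi> \<le> 1"
  shows "\<phi> \<le> Phi_star n m (ws(j:=w)) j \<theta> \<longleftrightarrow>
         (\<forall>\<psi>\<in>{0..<\<phi>}. \<psi> + Gf n m ws j (interim n w \<psi>) < \<theta>)"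
proof -
  define x where "x = interim n w"
  define G where "G = Gf n m ws j"
  define Y where "Y = Sup {ereal y |y. \<theta> \<le> xinv x (ereal y) + G y}"
  have P: "Phi_star n m (ws(j:=w)) j \<theta> = xinv x Y"
    unfolding x_def G_def Y_def by (rule Phi_strict_eq[OF assms(1,2)])
  have sd: "strictly_decr x" using assms(2) by (simp add: x_def)
  have xc: "continuous_on {0..1} x" unfolding x_def by (rule interim_cont)
  show ?thesis unfolding P x_def[symmetric] G_def[symmetric]
  proof
    assume le: "\<phi> \<le> xinv x Y"
    have Y0: "Y \<le> ereal (x 0)"
    proof (rule ccontr)
      assume "\<not> Y \<le> ereal (x 0)"
      then have "xinv x Y = 0" by (intro xinv_big) simp
      then show False using le assms(3) by simp
    qed
    note g = xinv_greatest[OF xc Y0]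
    have "x (xinv x Y) \<le> x \<phi>" using g le assms(3) by (intro sd_mono[OF sd]) auto
    then have Yphi: "Y \<le> ereal (x \<phi>)" using g by (meson ereal_less_eq(3) order_trans)
    show "\<forall>\<psi>\<in>{0..<\<phi>}. \<psi> + G (x \<psi>) < \<theta>"
    proof
      fix \<psi> assume psi: "\<psi> \<in> {0..<\<phi>}"
      show "\<psi> + G (x \<psi>) < \<theta>"
      proof (rule ccontr)
        assume "\<not> \<psi> + G (x \<psi>) < \<theta>"
        then have th: "\<theta> \<le> \<psi> + G (x \<psi>)" by simp
        have x0: "ereal (x \<psi>) \<le> ereal (x 0)" using psi assms by (auto intro!: sd_mono[OF sd])
        have "\<psi> \<le> xinv x (ereal (x \<psi>))" using xinv_greatest[OF xc x0] psi assms by auto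
        then have "\<theta> \<le> xinv x (ereal (x \<psi>)) + G (x \<psi>)" using th by simp
        then have "ereal (x \<psi>) \<le> Y" unfolding Y_def by (intro Sup_upper) blast
        then have "ereal (x \<psi>) \<le> ereal (x \<phi>)" using Yphi by (rule order_trans)
        then have "x \<psi> \<le> x \<phi>" by simp
        moreover have "x \<phi> < x \<psi>" using sd psi assms unfolding strictly_decr_def by auto
        ultimately show False by simp
      qed
    qed
  next
    assume H: "\<forall>\<psi>\<in>{0..<\<phi>}. \<psi> + G (x \<psi>) < \<theta>"
    have z0: "(0::real) \<in> {0..<\<phi>}" using assms(3) by simp
    have Yphi: "Y \<le> ereal (x \<phi>)"
      unfolding Y_def
    proof (rule Sup_least)
      fix z assume "z \<in> {ereal y |y. \<theta> \<le> xinv x (ereal y) + G y}"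
      then obtain y where z: "z = ereal y" and th: "\<theta> \<le> xinv x (ereal y) + G y" by blast
      show "z \<le> ereal (x \<phi>)"
      proof (rule ccontr)
        assume "\<not> z \<le> ereal (x \<phi>)"
        then have yphi: "x \<phi> < y" using z by simp
        show False
        proof (cases "x 0 < y")
          case True
          then have "xinv x (ereal y) = 0" by (intro xinv_big) simp
          then have "\<theta> \<le> G y" using th by simp
          moreover have "G y \<le> G (x 0)" unfolding G_def using True by (intro Gf_anti) simp
          moreover have "0 + G (x 0) < \<theta>" by (rule bspec[OF H z0])
          ultimately show False by simp
        next
          case False
          then have y0: "y \<le> x 0" by simp
          obtain b where b: "0 \<le> b" "b \<le> \<phi>" "x b = y"
            using IVT2'[of x \<phi> y 0] yphi y0 assms continuous_on_subset[OF xc, of "{0..\<phi>}"] by auto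
          define a where "a = xinv x (ereal y)"
          have y0': "ereal y \<le> ereal (x 0)" using y0 by simp
          note g = xinv_greatest[OF xc y0', folded a_def]
          have ba: "b \<le> a" using g b assms by auto
          have "x a \<le> x b" using g ba b by (intro sd_mono[OF sd]) auto
          then have xa: "x a = y" using g b by simp
          have "a < \<phi>"
          proof (rule ccontr)
            assume "\<not> a < \<phi>"
            then have "x a \<le> x \<phi>" using g assms by (intro sd_mono[OF sd]) auto
            then show False using xa yphi by simp
          qed
          then have "a + G (x a) < \<theta>" using H g by auto
          then show False using th xa a_def by simp
        qed
      qed
    qed
    have xphi0: "x \<phi> \<le> x 0" using assms by (intro sd_mono[OF sd]) auto
    then have Y0: "Y \<le> ereal (x 0)" using Yphi by (meson ereal_less_eq(3) order_trans)
    show "\<phi> \<le> xinv x Y" using xinv_greatest[OF xc Y0] Yphi assms by auto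
  qed
qed

definition Cc :: "nat \<Rightarrow> nat \<Rightarrow> (nat \<Rightarrow> nat \<Rightarrow> real) \<Rightarrow> nat \<Rightarrow> real \<Rightarrow> real \<Rightarrow> real \<Rightarrow> bool" where
  "Cc n m ws j Tj \<theta> \<psi> \<longleftrightarrow> (\<exists>k\<in>{1..n}. \<psi> + Gf n m ws j (Tj * xi n k \<psi>) < \<theta>)"

definition Dset :: "nat \<Rightarrow> nat \<Rightarrow> (nat \<Rightarrow> nat \<Rightarrow> real) \<Rightarrow> nat \<Rightarrow> real \<Rightarrow> real \<Rightarrow> real set" where
  "Dset n m ws j Tj \<theta> = {\<phi>\<in>{0..1}. \<forall>\<psi>\<in>{0..<\<phi>}. Cc n m ws j Tj \<theta> \<psi>}"

lemma D_0: "0 \<in> Dset n m ws j Tj \<theta>" by (simp add: Dset_def)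
lemma D_bdd: "bdd_above (Dset n m ws j Tj \<theta>)" by (rule bdd_aboveI[of _ 1]) (auto simp: Dset_def)
lemma D_ne: "Dset n m ws j Tj \<theta> \<noteq> {}" using D_0 by blast
lemma D_sup_ge0: "0 \<le> Sup (Dset n m ws j Tj \<theta>)" by (rule cSup_upper[OF D_0 D_bdd])
lemma D_sup_le1: "Sup (Dset n m ws j Tj \<theta>) \<le> 1" by (rule cSup_least[OF D_ne]) (auto simp: Dset_def)
lemma D_below: assumes "0 \<le> \<psi>" "\<psi> < Sup (Dset n m ws j Tj \<theta>)" shows "Cc n m ws j Tj \<theta> \<psi>"
proof -
  obtain \<phi> where "\<phi> \<in> Dset n m ws j Tj \<theta>" "\<psi> < \<phi>" using assms(2) less_cSup_iff[OF D_ne D_bdd] by blast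
  then show ?thesis using assms(1) by (auto simp: Dset_def)
qed
lemma D_mem: assumes "\<phi> \<in> {0..1}" "\<And>\<psi>. \<psi> \<in> {0..<\<phi>} \<Longrightarrow> Cc n m ws j Tj \<theta> \<psi>"
  shows "\<phi> \<le> Sup (Dset n m ws j Tj \<theta>)"
  by (rule cSup_upper[OF _ D_bdd]) (use assms in \<open>auto simp: Dset_def\<close>)

lemma Phi_strict_range: assumes "j < m" "strictly_decr (interim n w)"
  shows "Phi_star n m (ws(j:=w)) j \<theta> \<in> {0..1}"
  unfolding Phi_strict_eq[OF assms] by (rule xinv_range[OF interim_cont])

lemma UB_strict:
  assumes "j < m" "n \<ge> 1" "feasible n Tj w" "strictly_decr (interim n w)"
  shows "Phi_star n m (ws(j:=w)) j \<theta> \<le> Sup (Dset n m ws j Tj \<theta>)"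
proof -
  define p where "p = Phi_star n m (ws(j:=w)) j \<theta>"
  have pr: "p \<in> {0..1}" unfolding p_def by (rule Phi_strict_range[OF assms(1,4)])
  show ?thesis
  proof (cases "p = 0")
    case True
    then show ?thesis using D_sup_ge0 p_def by simp
  next
    case False
    then have pp: "0 < p" "p \<le> 1" using pr by auto
    have H: "\<forall>\<psi>\<in>{0..<p}. \<psi> + Gf n m ws j (interim n w \<psi>) < \<theta>"
      using Phi_char[OF assms(1,4) pp, of ws \<theta>] p_def by simp
    have "p \<le> Sup (Dset n m ws j Tj \<theta>)"
    proof (rule D_mem)
      show "p \<in> {0..1}" using pr .
      fix \<psi> assume psi: "\<psi> \<in> {0..<p}"
      obtain k where k: "k \<in> {1..n}" "interim n w \<psi> \<le> Tj * xi n k \<psi>"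
        using envelope[OF assms(3,2), of \<psi>] psi pp by auto
      have "Gf n m ws j (Tj * xi n k \<psi>) \<le> Gf n m ws j (interim n w \<psi>)" by (rule Gf_anti[OF k(2)])
      then show "Cc n m ws j Tj \<theta> \<psi>" unfolding Cc_def using H psi k(1) by force
    qed
    then show ?thesis using p_def by simp
  qed
qed

lemma const_not_sd: "const_on01 x \<Longrightarrow> \<not> strictly_decr x"
  unfolding const_on01_def strictly_decr_def by (metis atLeastAtMost_iff order_refl zero_le_one zero_less_one less_irrefl)

lemma Phi_const:
  fixes ws :: "nat \<Rightarrow> nat \<Rightarrow> real" and w :: "nat \<Rightarrow> real" and n m j :: nat
  assumes "j < m" "const_on01 (interim n w)"
  defines "Oc \<equiv> {j'. j'<m \<and> j'\<noteq>j \<and> const_on01 (interim n (ws j'))}"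
    and "Os \<equiv> {j'. j'<m \<and> j'\<noteq>j \<and> strictly_decr (interim n (ws j'))}"
    and "c \<equiv> interim n w 0"
  shows "Phi_star n m (ws(j:=w)) j \<theta> =
    (if (\<forall>j'\<in>Oc. interim n (ws j') 0 \<le> c)
     then max 0 (\<theta> - min 1 (\<Sum>j'\<in>Os. xinv (interim n (ws j')) (ereal c))) / real (Suc (card {j'\<in>Oc. interim n (ws j') 0 = c}))
     else 0)"
proof -
  define xs where "xs = (\<lambda>j'. interim n ((ws(j:=w)) j'))"
  have xsj: "xs j = interim n w" by (simp add: xs_def)
  have xso: "\<And>j'. j' \<noteq> j \<Longrightarrow> xs j' = interim n (ws j')" by (simp add: xs_def)
  have nsd: "\<not> strictly_decr (xs j)" using const_not_sd[OF assms(2)] xsj by simp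
  have cj: "const_on01 (xs j)" using assms(2) xsj by simp
  have C_eq: "{j'. j' < m \<and> const_on01 (xs j')} = insert j Oc"
    using assms(1) cj xso unfolding Oc_def by auto
  have S_eq: "{j'. j' < m \<and> strictly_decr (xs j')} = Os"
  proof -
    have "(j' < m \<and> strictly_decr (xs j')) = (j' < m \<and> j' \<noteq> j \<and> strictly_decr (interim n (ws j')))" for j'
      using nsd xso by (cases "j' = j") auto
    then show ?thesis unfolding Os_def by simp
  qed
  have finOc: "finite Oc" unfolding Oc_def by (rule finite_subset[of _ "{..<m}"]) auto
  have jOc: "j \<notin> Oc" unfolding Oc_def by simp
  have Ocj: "\<And>j'. j' \<in> Oc \<Longrightarrow> xs j' = interim n (ws j')" using jOc xso by metis
  have P: "Phi_star n m (ws(j:=w)) j \<theta> =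
     (let C = insert j Oc; xstar = Max ((\<lambda>j'. xs j' 0) ` C); M1 = {j'\<in>C. xs j' 0 = xstar};
          qstar = min 1 (\<Sum>j'\<in>Os. xinv (xs j') (ereal xstar))
      in if j \<in> M1 then max 0 (\<theta> - qstar) / real (card M1) else 0)"
    unfolding Phi_star_def xs_def[symmetric] C_eq S_eq Let_def
    by (subst if_not_P[OF nsd], subst if_P[OF cj]) (rule refl)
  define V where "V = (\<lambda>j'. interim n (ws j') 0) ` Oc"
  have img: "(\<lambda>j'. xs j' 0) ` insert j Oc = insert c V"
  proof -
    have "(\<lambda>j'. xs j' 0) ` Oc = V" unfolding V_def
    proof (rule image_cong[OF refl])
      fix j' assume "j' \<in> Oc"
      then have "j' \<noteq> j" using jOc by blast
      then show "xs j' 0 = interim n (ws j') 0" using xso by simp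
    qed
    then show ?thesis using xsj c_def by simp
  qed
  have finV: "finite V" unfolding V_def using finOc by simp
  show ?thesis
  proof (cases "\<forall>j'\<in>Oc. interim n (ws j') 0 \<le> c")
    case True
    have Mx: "Max (insert c V) = c" using True finV by (intro Max_eqI) (auto simp: V_def)
    have M1: "{j'\<in>insert j Oc. xs j' 0 = c} = insert j {j'\<in>Oc. interim n (ws j') 0 = c}"
    proof -
      have "{j'\<in>insert j Oc. xs j' 0 = c} = insert j {j'\<in>Oc. xs j' 0 = c}" using xsj c_def by auto
      also have "{j'\<in>Oc. xs j' 0 = c} = {j'\<in>Oc. interim n (ws j') 0 = c}" using Ocj by auto
      finally show ?thesis .
    qed
    have cardM1: "card (insert j {j'\<in>Oc. interim n (ws j') 0 = c}) = Suc (card {j'\<in>Oc. interim n (ws j') 0 = c})"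
      using finOc jOc by (intro card_insert_disjoint) auto
    have sumeq: "(\<Sum>j'\<in>Os. xinv (xs j') (ereal c)) = (\<Sum>j'\<in>Os. xinv (interim n (ws j')) (ereal c))"
      using xso by (intro sum.cong) (auto simp: Os_def)
    show ?thesis unfolding P Let_def img Mx M1 cardM1 sumeq using True by simp
  next
    case False
    then obtain j0 where j0: "j0 \<in> Oc" "c < interim n (ws j0) 0" by force
    have "interim n (ws j0) 0 \<le> Max (insert c V)" using finV j0 by (intro Max_ge) (auto simp: V_def)
    then have "Max (insert c V) \<noteq> c" using j0 by simp
    then have nj: "j \<notin> {j'\<in>insert j Oc. xs j' 0 = Max (insert c V)}" using xsj c_def by auto
    show ?thesis unfolding P Let_def img if_not_P[OF False] using nj by simp
  qed
qed

lemma exists_left: assumes "eventually P (at_left (x::real))" shows "\<exists>y. P y"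
  using eventually_happens'[OF _ assms] trivial_limit_at_left_real[of x] by blast

lemma xi_tendsto: "((\<lambda>\<psi>. Tj * xi n k \<psi>) \<longlongrightarrow> Tj * xi n k x) (at_left x)"
proof -
  have "isCont (\<lambda>\<psi>. Tj * xi n k \<psi>) x" unfolding xi_def by (intro continuous_intros)
  then have "((\<lambda>\<psi>. Tj * xi n k \<psi>) \<longlongrightarrow> Tj * xi n k x) (at x)" by (simp add: isCont_def)
  then show ?thesis by (rule tendsto_mono[OF at_le[OF subset_UNIV]])
qed

lemma G_split:
  fixes ws :: "nat \<Rightarrow> nat \<Rightarrow> real" and n m j :: nat and T :: "nat \<Rightarrow> real"
  assumes "n \<ge> 1" "\<forall>j'<m. j' \<noteq> j \<longrightarrow> feasible n (T j') (ws j')"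
  defines "Oc \<equiv> {j'. j'<m \<and> j'\<noteq>j \<and> const_on01 (interim n (ws j'))}"
    and "Os \<equiv> {j'. j'<m \<and> j'\<noteq>j \<and> strictly_decr (interim n (ws j'))}"
  shows "Gf n m ws j y = (\<Sum>j'\<in>Os. xinv (interim n (ws j')) (ereal y)) + (\<Sum>j'\<in>Oc. xinv (interim n (ws j')) (ereal y))"
proof -
  have e: "{j'. j'<m \<and> j'\<noteq>j} = Os \<union> Oc"
  proof -
    have "strictly_decr (interim n (ws j')) \<or> const_on01 (interim n (ws j'))" if "j'<m" "j'\<noteq>j" for j'
      using feas_class[of n "T j'" "ws j'"] assms(1,2) that by blast
    then show ?thesis unfolding Os_def Oc_def by blast
  qed
  have d: "Os \<inter> Oc = {}" unfolding Os_def Oc_def using const_not_sd by blast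
  have f1: "finite Os" unfolding Os_def by (rule finite_subset[of _ "{..<m}"]) auto
  have f2: "finite Oc" unfolding Oc_def by (rule finite_subset[of _ "{..<m}"]) auto
  show ?thesis unfolding Gf_def e by (rule sum.union_disjoint[OF f1 f2 d])
qed

lemma G_le_S:
  fixes ws :: "nat \<Rightarrow> nat \<Rightarrow> real" and n m j :: nat and T :: "nat \<Rightarrow> real"
  assumes "n \<ge> 1" "\<forall>j'<m. j' \<noteq> j \<longrightarrow> feasible n (T j') (ws j')"
    and "c \<le> y" "\<forall>j'\<in>{j'. j'<m \<and> j'\<noteq>j \<and> const_on01 (interim n (ws j'))}. interim n (ws j') 0 < y"
  shows "Gf n m ws j y \<le> (\<Sum>j'\<in>{j'. j'<m \<and> j'\<noteq>j \<and> strictly_decr (interim n (ws j'))}. xinv (interim n (ws j')) (ereal c))"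
proof -
  have z: "(\<Sum>j'\<in>{j'. j'<m \<and> j'\<noteq>j \<and> const_on01 (interim n (ws j'))}. xinv (interim n (ws j')) (ereal y)) = 0"
    using assms(4) by (intro sum.neutral) (auto intro!: xinv_big)
  have "(\<Sum>j'\<in>{j'. j'<m \<and> j'\<noteq>j \<and> strictly_decr (interim n (ws j'))}. xinv (interim n (ws j')) (ereal y))
     \<le> (\<Sum>j'\<in>{j'. j'<m \<and> j'\<noteq>j \<and> strictly_decr (interim n (ws j'))}. xinv (interim n (ws j')) (ereal c))"
    using assms(3) by (intro sum_mono xinv_anti interim_cont) simp
  then show ?thesis using G_split[OF assms(1,2), of y] z by simp
qed

lemma two_pow: "N \<ge> 1 \<Longrightarrow> Suc N \<le> 2^N"
  by (induction N rule: nat_induct_at_least) auto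

lemma xi_pred_gt: assumes "n \<ge> 2" "0 \<le> \<psi>" "\<psi> < 1/2" shows "1 / real n < xi n (n-1) \<psi>"
proof -
  obtain N where n: "n = Suc N" and N: "N \<ge> 1" using assms(1) by (cases n) auto
  have xe: "xi n (n-1) \<psi> = (1 - \<psi>^N) / real N" using Sk_pred[OF N, of \<psi>] n by (simp add: xi_Sk)
  have "\<psi>^N < (1/2)^N" using assms N by (intro power_strict_mono) auto
  also have "(1/2::real)^N = 1 / 2^N" by (simp add: power_divide)
  also have "\<dots> \<le> 1 / real (Suc N)"
  proof -
    have "real (Suc N) \<le> 2^N" using two_pow[OF N] by (metis of_nat_le_iff of_nat_numeral of_nat_power)
    then show ?thesis by (intro divide_left_mono) auto
  qed
  finally have "\<psi>^N < 1 / real (Suc N)" .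
  then have "real (Suc N) * \<psi>^N < 1" by (simp add: field_simps)
  then have "1 / real (Suc N) < (1 - \<psi>^N) / real N" using N by (simp add: field_simps)
  then show ?thesis using xe n by simp
qed

lemma UB_const:
  fixes ws :: "nat \<Rightarrow> nat \<Rightarrow> real" and n m j :: nat and T :: "nat \<Rightarrow> real" and w :: "nat \<Rightarrow> real"
  assumes "j < m" "n \<ge> 2" "feasible n Tj w" "const_on01 (interim n w)"
    and "\<forall>j'<m. j' \<noteq> j \<longrightarrow> feasible n (T j') (ws j')" "\<theta> \<le> 1" "0 < Tj"
  shows "Phi_star n m (ws(j:=w)) j \<theta> \<le> Sup (Dset n m ws j Tj \<theta>)"
proof -
  have n1: "n \<ge> 1" using assms(2) by simp
  define c where "c = interim n w 0"
  define Oc where "Oc = {j'. j'<m \<and> j'\<noteq>j \<and> const_on01 (interim n (ws j'))}"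
  define Os where "Os = {j'. j'<m \<and> j'\<noteq>j \<and> strictly_decr (interim n (ws j'))}"
  define S where "S = (\<Sum>j'\<in>Os. xinv (interim n (ws j')) (ereal c))"
  define K where "K = card {j'\<in>Oc. interim n (ws j') 0 = c}"
  have P: "Phi_star n m (ws(j:=w)) j \<theta> =
    (if (\<forall>j'\<in>Oc. interim n (ws j') 0 \<le> c) then max 0 (\<theta> - min 1 S) / real (Suc K) else 0)"
    unfolding Oc_def Os_def c_def S_def K_def by (rule Phi_const[OF assms(1,4)])
  have "\<forall>\<phi>\<in>{0..1}. interim n w \<phi> = interim n w 0" using assms(4) by (simp only: const_on01_def)
  then have "interim n w 1 = interim n w 0" by (rule bspec) simp
  then have cw: "c = w n" using interim_at1[OF n1, of w] c_def by simp
  have cT: "c \<le> Tj / real n" using wn_le[OF assms(3)] cw n1 by (simp add: field_simps mult.commute)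
  have S0: "0 \<le> S" unfolding S_def using xinv_range[OF interim_cont] by (intro sum_nonneg) auto
  have finOc: "finite Oc" unfolding Oc_def by (rule finite_subset[of _ "{..<m}"]) auto
  show ?thesis
  proof (cases "\<forall>j'\<in>Oc. interim n (ws j') 0 \<le> c")
    case False
    show ?thesis unfolding P if_not_P[OF False] by (rule D_sup_ge0)
  next
    case allc: True
    define R where "R = max 0 (\<theta> - min 1 S) / real (Suc K)"
    have PR: "Phi_star n m (ws(j:=w)) j \<theta> = R" using P allc R_def by simp
    show ?thesis
    proof (cases "\<theta> - min 1 S \<le> 0")
      case True
      then have "R = 0" unfolding R_def by simp
      then show ?thesis using PR D_sup_ge0 by simp
    next
      case False
      then have mS: "min 1 S = S" and Sth: "S < \<theta>" using assms(6) by (auto simp: min_def split: if_splits)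
      have Rdef: "R = (\<theta> - S) / real (Suc K)" unfolding R_def using mS Sth by simp
      have R0: "0 \<le> R" unfolding Rdef using Sth by simp
      have RS: "R \<le> \<theta> - S"
      proof -
        have "(\<theta> - S) / real (Suc K) \<le> (\<theta> - S) / 1" using Sth by (intro divide_left_mono) auto
        then show ?thesis unfolding Rdef by simp
      qed
      have R1: "R \<le> 1" using RS S0 assms(6) by simp
      have "R \<le> Sup (Dset n m ws j Tj \<theta>)"
      proof (rule D_mem)
        show "R \<in> {0..1}" using R0 R1 by simp
        fix \<psi> assume psi: "\<psi> \<in> {0..<R}"
        show "Cc n m ws j Tj \<theta> \<psi>"
        proof (cases "K = 0")
          case True
          have emp: "{j'\<in>Oc. interim n (ws j') 0 = c} = {}" using True finOc unfolding K_def by simp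
          have y: "Tj * xi n n \<psi> = Tj / real n" using Sk_n[OF n1] by (simp add: xi_Sk)
          have lt: "\<forall>j'\<in>Oc. interim n (ws j') 0 < Tj * xi n n \<psi>"
          proof
            fix j' assume j': "j' \<in> Oc"
            then have "interim n (ws j') 0 \<le> c" "interim n (ws j') 0 \<noteq> c" using allc emp by auto
            then show "interim n (ws j') 0 < Tj * xi n n \<psi>" using y cT by simp
          qed
          have G: "Gf n m ws j (Tj * xi n n \<psi>) \<le> S"
            unfolding S_def Os_def using G_le_S[OF n1 assms(5), of c] lt y cT unfolding Oc_def by simp
          have "\<psi> + Gf n m ws j (Tj * xi n n \<psi>) < \<theta>" using G psi RS by simp
          then show ?thesis unfolding Cc_def using n1 by (intro bexI[of _ n]) auto
        next
          case False
          have "R \<le> (\<theta> - S) / 2"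
          proof -
            have "(\<theta> - S) / real (Suc K) \<le> (\<theta> - S) / 2" using Sth False by (intro divide_left_mono) auto
            then show ?thesis unfolding Rdef by simp
          qed
          then have psi2: "\<psi> < 1/2" using psi S0 assms(6) by simp
          have "1 / real n < xi n (n-1) \<psi>" using xi_pred_gt[OF assms(2), of \<psi>] psi psi2 by simp
          then have "Tj * (1 / real n) < Tj * xi n (n-1) \<psi>" using assms(7) by (rule mult_strict_left_mono)
          then have gt: "Tj / real n < Tj * xi n (n-1) \<psi>" by simp
          have lt: "\<forall>j'\<in>Oc. interim n (ws j') 0 < Tj * xi n (n-1) \<psi>"
            using allc gt cT by fastforce
          have G: "Gf n m ws j (Tj * xi n (n-1) \<psi>) \<le> S"
            unfolding S_def Os_def using G_le_S[OF n1 assms(5), of c] lt gt cT unfolding Oc_def by simp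
          have "\<psi> + Gf n m ws j (Tj * xi n (n-1) \<psi>) < \<theta>" using G psi RS by simp
          then show ?thesis unfolding Cc_def using assms(2) by (intro bexI[of _ "n-1"]) auto
        qed
      qed
      then show ?thesis using PR by simp
    qed
  qed
qed

lemma LB_strict:
  fixes ws :: "nat \<Rightarrow> nat \<Rightarrow> real" and n m j ks :: nat
  assumes "j < m" "1 \<le> ks" "ks < n" "0 < Tj"
    and "\<forall>k\<in>{1..n}. xi n k (Sup (Dset n m ws j Tj \<theta>)) \<le> xi n ks (Sup (Dset n m ws j Tj \<theta>))"
  shows "Sup (Dset n m ws j Tj \<theta>) \<le> Phi_star n m (ws(j:=simple ks Tj)) j \<theta>"
proof -
  define ph where "ph = Sup (Dset n m ws j Tj \<theta>)"
  have sd: "strictly_decr (interim n (simple ks Tj))" by (rule simple_strict[OF assms(2,3,4)])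
  have ie: "\<And>\<psi>. interim n (simple ks Tj) \<psi> = Tj * xi n ks \<psi>" using assms(2,3) by (intro interim_simple) auto
  show ?thesis
  proof (cases "ph = 0")
    case True
    then show ?thesis using Phi_strict_range[OF assms(1) sd, of ws \<theta>] ph_def by simp
  next
    case False
    then have php: "0 < ph" "ph \<le> 1" using D_sup_ge0 D_sup_le1 ph_def by (metis order_le_less)+
    have "\<forall>\<psi>\<in>{0..<ph}. \<psi> + Gf n m ws j (interim n (simple ks Tj) \<psi>) < \<theta>"
    proof
      fix \<psi> assume psi: "\<psi> \<in> {0..<ph}"
      define a where "a = Tj * xi n ks \<psi>"
      have "Sk n ks ph < Sk n ks \<psi>" using Sk_strict[OF assms(2,3), of \<psi> ph] psi php by auto
      then have "Sk n ks ph / real ks < Sk n ks \<psi> / real ks" using assms(2) by (intro divide_strict_right_mono) auto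
      then have "Tj * xi n ks ph < a" unfolding a_def xi_Sk using assms(4) by (rule mult_strict_left_mono)
      then have ev1: "\<forall>k\<in>{1..n}. eventually (\<lambda>\<psi>'. Tj * xi n k \<psi>' < a) (at_left ph)"
      proof (intro ballI)
        fix k assume k: "k \<in> {1..n}"
        have "Tj * xi n k ph \<le> Tj * xi n ks ph" using assms(4,5) k ph_def by (intro mult_left_mono) auto
        then have "Tj * xi n k ph < a" using \<open>Tj * xi n ks ph < a\<close> by simp
        then show "eventually (\<lambda>\<psi>'. Tj * xi n k \<psi>' < a) (at_left ph)"
          by (rule order_tendstoD(2)[OF xi_tendsto])
      qed
      have "eventually (\<lambda>\<psi>'. (\<forall>k\<in>{1..n}. Tj * xi n k \<psi>' < a) \<and> \<psi>' \<in> {\<psi><..<ph}) (at_left ph)"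
        using eventually_ball_finite[OF _ ev1] eventually_at_left_real[of \<psi> ph] psi
        by (intro eventually_conj) auto
      then obtain \<psi>' where p': "\<forall>k\<in>{1..n}. Tj * xi n k \<psi>' < a" "\<psi> < \<psi>'" "\<psi>' < ph"
        using exists_left by fastforce
      have "Cc n m ws j Tj \<theta> \<psi>'" using D_below[of \<psi>'] p' psi ph_def by simp
      then obtain k where k: "k \<in> {1..n}" "\<psi>' + Gf n m ws j (Tj * xi n k \<psi>') < \<theta>" unfolding Cc_def by blast
      have "Tj * xi n k \<psi>' < a" using p'(1) k(1) by blast
      then have "Gf n m ws j a \<le> Gf n m ws j (Tj * xi n k \<psi>')" by (intro Gf_anti) simp
      then show "\<psi> + Gf n m ws j (interim n (simple ks Tj) \<psi>) < \<theta>"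
        using k p' unfolding ie a_def[symmetric] by simp
    qed
    then show ?thesis using Phi_char[OF assms(1) sd php] ph_def by simp
  qed
qed

lemma LB_const:
  fixes ws :: "nat \<Rightarrow> nat \<Rightarrow> real" and n m j :: nat and T :: "nat \<Rightarrow> real"
  assumes "j < m" "n \<ge> 2" "0 < Tj" "\<forall>j'<m. j' \<noteq> j \<longrightarrow> feasible n (T j') (ws j')" "\<theta> \<le> 1"
    and "\<forall>k\<in>{1..<n}. xi n k (Sup (Dset n m ws j Tj \<theta>)) < xi n n (Sup (Dset n m ws j Tj \<theta>))"
  shows "Sup (Dset n m ws j Tj \<theta>) \<le> Phi_star n m (ws(j:=simple n Tj)) j \<theta>"
proof -
  have n1: "n \<ge> 1" using assms(2) by simp
  define ph where "ph = Sup (Dset n m ws j Tj \<theta>)"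
  define w where "w = simple n Tj"
  have iw: "\<And>\<psi>. interim n w \<psi> = Tj / real n" unfolding w_def by (rule simple_n[OF n1])
  have cw: "const_on01 (interim n w)" unfolding const_on01_def iw by simp
  define c where "c = interim n w 0"
  have cT: "c = Tj / real n" unfolding c_def iw ..
  define Oc where "Oc = {j'. j'<m \<and> j'\<noteq>j \<and> const_on01 (interim n (ws j'))}"
  define Os where "Os = {j'. j'<m \<and> j'\<noteq>j \<and> strictly_decr (interim n (ws j'))}"
  define S where "S = (\<Sum>j'\<in>Os. xinv (interim n (ws j')) (ereal c))"
  define K where "K = card {j'\<in>Oc. interim n (ws j') 0 = c}"
  have P: "Phi_star n m (ws(j:=w)) j \<theta> =
    (if (\<forall>j'\<in>Oc. interim n (ws j') 0 \<le> c) then max 0 (\<theta> - min 1 S) / real (Suc K) else 0)"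
    unfolding Oc_def Os_def c_def S_def K_def by (rule Phi_const[OF assms(1) cw])
  have Pnn: "0 \<le> Phi_star n m (ws(j:=w)) j \<theta>" unfolding P by simp
  have xin: "\<And>\<psi>. Tj * xi n n \<psi> = c" using Sk_n[OF n1] cT by (simp add: xi_Sk)
  show ?thesis
  proof (cases "ph = 0")
    case True
    then show ?thesis using Pnn ph_def w_def by simp
  next
    case False
    then have php: "0 < ph" "ph \<le> 1" using D_sup_ge0 D_sup_le1 ph_def by (metis order_le_less)+
    have Gc: "Gf n m ws j c \<le> \<theta> - ph"
    proof (rule ccontr)
      assume "\<not> Gf n m ws j c \<le> \<theta> - ph"
      then have bl: "max 0 (\<theta> - Gf n m ws j c) < ph" using php by simp
      have ev1: "\<forall>k\<in>{1..<n}. eventually (\<lambda>\<psi>. Tj * xi n k \<psi> < c) (at_left ph)"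
      proof (intro ballI)
        fix k assume k: "k \<in> {1..<n}"
        have "Tj * xi n k ph < Tj * xi n n ph" using assms(3,6) k ph_def by (intro mult_strict_left_mono) auto
        then have "Tj * xi n k ph < c" using xin by simp
        then show "eventually (\<lambda>\<psi>. Tj * xi n k \<psi> < c) (at_left ph)"
          by (rule order_tendstoD(2)[OF xi_tendsto])
      qed
      have "eventually (\<lambda>\<psi>. (\<forall>k\<in>{1..<n}. Tj * xi n k \<psi> < c) \<and> \<psi> \<in> {max 0 (\<theta> - Gf n m ws j c)<..<ph}) (at_left ph)"
        using eventually_ball_finite[OF _ ev1] eventually_at_left_real[OF bl]
        by (intro eventually_conj) auto
      then obtain \<psi> where p: "\<forall>k\<in>{1..<n}. Tj * xi n k \<psi> < c" "max 0 (\<theta> - Gf n m ws j c) < \<psi>" "\<psi> < ph"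
        using exists_left by fastforce
      have "Cc n m ws j Tj \<theta> \<psi>" using D_below[of \<psi>] p ph_def by simp
      then obtain k where k: "k \<in> {1..n}" "\<psi> + Gf n m ws j (Tj * xi n k \<psi>) < \<theta>" unfolding Cc_def by blast
      have "Tj * xi n k \<psi> \<le> c"
      proof (cases "k = n")
        case True then show ?thesis using xin by simp
      next
        case False then show ?thesis using p(1) k(1) by (auto intro: less_imp_le)
      qed
      then have "Gf n m ws j c \<le> Gf n m ws j (Tj * xi n k \<psi>)" by (rule Gf_anti)
      then show False using k(2) p(2) by simp
    qed
    then have Gc1: "Gf n m ws j c < 1" using php assms(5) by simp
    have fin: "finite {j'. j'<m \<and> j'\<noteq>j}" by simp
    have nn: "\<And>j'. 0 \<le> xinv (interim n (ws j')) (ereal c)" using xinv_range[OF interim_cont] by simp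
    have lt: "\<forall>j'\<in>Oc. interim n (ws j') 0 < c"
    proof
      fix j' assume j': "j' \<in> Oc"
      show "interim n (ws j') 0 < c"
      proof (rule ccontr)
        assume "\<not> interim n (ws j') 0 < c"
        then have "ereal c \<le> ereal (interim n (ws j') 0)" by simp
        then have one: "xinv (interim n (ws j')) (ereal c) = 1"
          using j' unfolding Oc_def by (intro xinv_const1 interim_cont) auto
        have "xinv (interim n (ws j')) (ereal c) \<le> Gf n m ws j c"
          unfolding Gf_def using j' nn unfolding Oc_def by (intro member_le_sum[OF _ _ fin]) auto
        then show False using one Gc1 by simp
      qed
    qed
    then have allc: "\<forall>j'\<in>Oc. interim n (ws j') 0 \<le> c" by (auto intro: less_imp_le)
    have K0: "K = 0" unfolding K_def using lt by (auto intro!: card_eq_0_iff[THEN iffD2])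
    have SG: "S \<le> Gf n m ws j c" unfolding S_def Gf_def Os_def using nn
      by (intro sum_mono2[OF fin]) auto
    have "ph \<le> \<theta> - min 1 S" using Gc SG by (simp add: min_def)
    also have "\<dots> \<le> max 0 (\<theta> - min 1 S) / real (Suc K)" using K0 by simp
    also have "\<dots> = Phi_star n m (ws(j:=w)) j \<theta>" unfolding P using allc by simp
    finally show ?thesis using ph_def w_def by simp
  qed
qed

lemma Phi_neither:
  assumes "\<not> strictly_decr (interim n w)" "\<not> const_on01 (interim n w)"
  shows "Phi_star n m (ws(j:=w)) j \<theta> = 0"
  unfolding Phi_star_def Let_def fun_upd_same
  by (subst if_not_P[OF assms(1)], subst if_not_P[OF assms(2)]) (rule refl)

theorem theorem4:
  fixes n m j :: nat and T :: "nat \<Rightarrow> real" and ws :: "nat \<Rightarrow> nat \<Rightarrow> real" and \<theta> :: real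
  assumes "n \<ge> 2" and "m \<ge> 1" and "j < m"
    and "0 \<le> \<theta>" and "\<theta> \<le> 1" and "T j > 0"
    and "\<forall>j'<m. j' \<noteq> j \<longrightarrow> feasible n (T j') (ws j')"
  shows "\<exists>kstar\<in>{1..n}.
           (\<forall>w. feasible n (T j) w \<longrightarrow>
                 R_hat n m (ws(j := w)) j \<theta> \<le> R_hat n m (ws(j := simple kstar (T j))) j \<theta>)
         \<and> (let \<phi>star = Phi_star n m (ws(j := simple kstar (T j))) j \<theta>
            in \<forall>k\<in>{1..n}. xi n k \<phi>star \<le> xi n kstar \<phi>star)"
proof -
  have n1: "n \<ge> 1" using assms(1) by simp
  define ph where "ph = Sup (Dset n m ws j (T j) \<theta>)"
  have UB: "\<And>w. feasible n (T j) w \<Longrightarrow> Phi_star n m (ws(j:=w)) j \<theta> \<le> ph"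
  proof -
    fix w assume fw: "feasible n (T j) w"
    show "Phi_star n m (ws(j:=w)) j \<theta> \<le> ph"
    proof (cases "strictly_decr (interim n w)")
      case True
      then show ?thesis unfolding ph_def by (rule UB_strict[OF assms(3) n1 fw])
    next
      case nsd: False
      show ?thesis
      proof (cases "const_on01 (interim n w)")
        case True
        then show ?thesis unfolding ph_def by (rule UB_const[OF assms(3,1) fw _ assms(7,5,6)])
      next
        case False
        then show ?thesis using Phi_neither[OF nsd False] D_sup_ge0 ph_def by simp
      qed
    qed
  qed
  have "Max ((\<lambda>k. xi n k ph) ` {1..n}) \<in> (\<lambda>k. xi n k ph) ` {1..n}"
    by (rule Max_in) (use n1 in auto)
  then obtain k0 where k0: "k0 \<in> {1..n}" "xi n k0 ph = Max ((\<lambda>k. xi n k ph) ` {1..n})"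
    by force
  have k0max: "\<forall>k\<in>{1..n}. xi n k ph \<le> xi n k0 ph" unfolding k0(2) by simp
  obtain ks where ks: "ks \<in> {1..n}" "\<forall>k\<in>{1..n}. xi n k ph \<le> xi n ks ph"
     "ph \<le> Phi_star n m (ws(j:=simple ks (T j))) j \<theta>"
  proof (cases "\<exists>k\<in>{1..<n}. xi n k0 ph \<le> xi n k ph")
    case True
    then obtain k where k: "k \<in> {1..<n}" "xi n k0 ph \<le> xi n k ph" by blast
    have km: "\<forall>k'\<in>{1..n}. xi n k' ph \<le> xi n k ph" using k0max k(2) by force
    have "ph \<le> Phi_star n m (ws(j:=simple k (T j))) j \<theta>"
      unfolding ph_def by (rule LB_strict[OF assms(3) _ _ assms(6)]) (use k km ph_def in auto)
    then show ?thesis using that[of k] k km by auto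
  next
    case False
    then have k0n: "k0 = n" using k0(1) by (metis atLeastAtMost_iff atLeastLessThan_iff order_refl le_neq_implies_less)
    have lt: "\<forall>k\<in>{1..<n}. xi n k ph < xi n n ph" using False k0n by (auto simp: not_le)
    have "ph \<le> Phi_star n m (ws(j:=simple n (T j))) j \<theta>"
      unfolding ph_def by (rule LB_const[OF assms(3,1,6,7,5)]) (use lt ph_def in auto)
    then show ?thesis using that[of n] k0max k0n n1 by auto
  qed
  have feas: "feasible n (T j) (simple ks (T j))" using ks(1) assms(6) by (intro simple_feasible) auto
  have eq: "Phi_star n m (ws(j:=simple ks (T j))) j \<theta> = ph" using UB[OF feas] ks(3) by simp
  show ?thesis
  proof (intro bexI[OF _ ks(1)] conjI allI impI)
    fix w assume fw: "feasible n (T j) w"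
    show "R_hat n m (ws(j := w)) j \<theta> \<le> R_hat n m (ws(j := simple ks (T j))) j \<theta>"
      unfolding R_hat_def eq using UB[OF fw] by (intro mult_left_mono) auto
  next
    show "let \<phi>star = Phi_star n m (ws(j := simple ks (T j))) j \<theta>
            in \<forall>k\<in>{1..n}. xi n k \<phi>star \<le> xi n ks \<phi>star"
      unfolding eq Let_def using ks(2) .
  qed
qed

end
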